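(* Let $0<\alpha\leq2$, let $X$ be a scalar symmetric $\alpha$-stable Lévy process with $X_0=0$ and $\mathbb{E}[e^{iuX_t}]=e^{-|u|^\alpha t}$, let $T>0$, $n\in\mathbb{N}$, $\Delta_n=T/n$, $t_k=k\Delta_n$, and $\hat{\mathcal{O}}_{T,n}(0)=\Delta_n\sum_{k=1}^n\mathbf{1}(X_{t_{k-1}}\geq0)$. Then \[ \|\hat{\mathcal{O}}_{T,n}(0)\|^2_{L^2(\mathbb{P})}=\frac38T^2+\frac38T\Delta_n+\frac14\Delta_n^2. \] *)

theory Defs
  imports "HOL-Probability.Probability"
begin

definition sym_stable_levy :: "'a measure \<Rightarrow> real \<Rightarrow> (real \<Rightarrow> 'a \<Rightarrow> real) \<Rightarrow> bool" where
  "sym_stable_levy M \<alpha> X \<longleftrightarrow>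
     prob_space M \<and>
     (\<forall>t\<ge>0. X t \<in> borel_measurable M) \<and>
     (AE \<omega> in M. X 0 \<omega> = 0) \<and>
     (\<forall>(s::nat \<Rightarrow> real) m. 0 \<le> s 0 \<and> strict_mono s \<longrightarrow>
        prob_space.indep_vars M (\<lambda>_. borel) (\<lambda>i \<omega>. X (s (Suc i)) \<omega> - X (s i) \<omega>) {..<m}) \<and>
     (\<forall>s t u. 0 \<le> s \<and> s \<le> t \<longrightarrow>
        char (distr M borel (\<lambda>\<omega>. X t \<omega> - X s \<omega>)) u
          = exp (- complex_of_real (\<bar>u\<bar> powr \<alpha> * (t - s)))) \<and>
     (AE \<omega> in M. (\<forall>t\<ge>0. continuous (at_right t) (\<lambda>r. X r \<omega>)) \<and>
                  (\<forall>t>0. \<exists>l. ((\<lambda>r. X r \<omega>) \<longlongrightarrow> l) (at_left t)))"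

definition occ_est :: "(real \<Rightarrow> 'a \<Rightarrow> real) \<Rightarrow> real \<Rightarrow> nat \<Rightarrow> 'a \<Rightarrow> real" where
  "occ_est X T n \<omega> = (T / real n) *
     (\<Sum>k = 1..n. indicator {0..} (X (real (k - 1) * (T / real n)) \<omega>))"

end

theory Submission
  imports Defs
begin


lemma phi_bound:
  fixes \<alpha> c :: real
  assumes a: "0 < \<alpha>" and c: "0 < c"
  shows "\<exists>K. \<forall>t::real. exp (-(\<bar>t\<bar> powr \<alpha> * c)) \<le> K * inverse (1 + t^2)"
proof -
  define k where "k = nat \<lceil>2 / \<alpha>\<rceil>"
  have k1: "k \<ge> 1"
  proof -
    have "0 < 2 / \<alpha>" using a by simp
    hence "1 \<le> \<lceil>2 / \<alpha>\<rceil>" by (simp add: one_le_ceiling)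
    thus ?thesis unfolding k_def by linarith
  qed
  have ak: "2 \<le> \<alpha> * real k"
  proof -
    have "2 / \<alpha> \<le> real k" unfolding k_def by linarith
    thus ?thesis using a by (simp add: field_simps)
  qed
  define K where "K = 2 + (real k / c) ^ k"
  have "exp (-(\<bar>t\<bar> powr \<alpha> * c)) * (1 + t^2) \<le> K" for t :: real
  proof -
    define y where "y = \<bar>t\<bar> powr \<alpha> * c"
    have y0: "0 \<le> y" unfolding y_def using c by simp
    have e1: "exp (-y) \<le> 1" using y0 by simp
    have e0: "0 < exp (-y)" by simp
    have Kpos: "2 \<le> K" unfolding K_def using c by simp
    show ?thesis
    proof (cases "\<bar>t\<bar> \<le> 1")
      case True
      have "t^2 \<le> 1" using True by (simp add: abs_square_le_1)
      hence "exp (-y) * (1 + t^2) \<le> 1 * 2"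
        using e1 e0 by (intro mult_mono) auto
      thus ?thesis using Kpos y_def by simp
    next
      case False
      hence t1: "1 < \<bar>t\<bar>" by simp
      have "t^2 = \<bar>t\<bar> powr 2" using t1 by (simp add: powr_numeral)
      also have "\<dots> \<le> \<bar>t\<bar> powr (\<alpha> * real k)" using t1 ak by (intro powr_mono) auto
      also have "\<dots> = (\<bar>t\<bar> powr \<alpha>) ^ k"
      proof -
        have "0 < \<bar>t\<bar> powr \<alpha>" using t1 by simp
        hence "(\<bar>t\<bar> powr \<alpha>) ^ k = (\<bar>t\<bar> powr \<alpha>) powr (real k)" by (simp add: powr_realpow)
        also have "\<dots> = \<bar>t\<bar> powr (\<alpha> * real k)" by (simp add: powr_powr)
        finally show ?thesis by simp
      qed
      also have "\<dots> = (y / c) ^ k" unfolding y_def using c by simp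
      also have "\<dots> = (real k / c) ^ k * (y / real k) ^ k" 
      proof -
        have "y / c = (real k / c) * (y / real k)" using k1 by (simp add: field_simps)
        thus ?thesis by (simp only: power_mult_distrib)
      qed
      also have "\<dots> \<le> (real k / c) ^ k * exp y"
      proof -
        have "(y / real k) ^ k \<le> (1 + y / real k) ^ k"
          using y0 k1 by (intro power_mono) auto
        also have "\<dots> \<le> exp y" using y0 k1 by (intro exp_ge_one_plus_x_over_n_power_n) auto
        finally show ?thesis using c by (intro mult_left_mono) auto
      qed
      finally have "t^2 \<le> (real k / c) ^ k * exp y" .
      hence "exp (-y) * t^2 \<le> (real k / c) ^ k"
        using e0 by (simp add: exp_minus field_simps)
      hence "exp (-y) * (1 + t^2) \<le> 1 + (real k / c) ^ k" 
      proof -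
        have "exp (-y) * (1 + t^2) = exp (-y) + exp (-y) * t^2" by (simp add: distrib_left)
        with e1 \<open>exp (-y) * t^2 \<le> (real k / c) ^ k\<close> show ?thesis by linarith
      qed
      thus ?thesis unfolding K_def y_def by simp
    qed
  qed
  hence "exp (-(\<bar>t\<bar> powr \<alpha> * c)) \<le> K * inverse (1 + t^2)" for t :: real
    by (simp add: field_simps add_pos_nonneg)
  thus ?thesis by blast
qed

lemma integrable_phi:
  fixes \<alpha> c :: real
  assumes a: "0 < \<alpha>" and c: "0 < c"
  shows "integrable lborel (\<lambda>t::real. exp (-(\<bar>t\<bar> powr \<alpha> * c)))"
proof -
  obtain K where K: "\<And>t::real. exp (-(\<bar>t\<bar> powr \<alpha> * c)) \<le> K * inverse (1 + t^2)"
    using phi_bound[OF a c] by blast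
  have "integrable lborel (\<lambda>x::real. inverse (1 + x^2))"
    using integrable_inverse_1_plus_square by (simp add: set_integrable_def)
  hence i: "integrable lborel (\<lambda>x::real. K * inverse (1 + x^2))" by simp
  show ?thesis
  proof (rule Bochner_Integration.integrable_bound[OF i])
    show "(\<lambda>t::real. exp (-(\<bar>t\<bar> powr \<alpha> * c))) \<in> borel_measurable lborel" by measurable
    show "AE x in lborel. norm (exp (-(\<bar>x\<bar> powr \<alpha> * c))) \<le> norm (K * inverse (1 + x^2))"
      using K by (auto intro!: AE_I2 order_trans[OF _ abs_ge_self])
  qed
qed



lemma no_atom:
  fixes \<mu> :: "real measure" and \<alpha> c :: real
  assumes rd: "real_distribution \<mu>" and a: "0 < \<alpha>" and c: "0 < c"
    and ch: "\<And>u. char \<mu> u = exp (- complex_of_real (\<bar>u\<bar> powr \<alpha> * c))"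
  shows "measure \<mu> {0} = 0"
proof -
  interpret real_distribution \<mu> by (rule rd)
  define g where "g = (\<lambda>t::real. exp (-(\<bar>t\<bar> powr \<alpha> * c)))"
  have ig: "integrable lborel g" unfolding g_def by (rule integrable_phi[OF a c])
  define J where "J = integral\<^sup>L lborel g"
  have J0: "0 \<le> J" unfolding J_def g_def by (intro integral_nonneg_AE) auto
  have normch: "norm (char \<mu> t) = g t" for t
    unfolding ch g_def by (simp only: exp_of_real[symmetric] of_real_minus[symmetric] norm_of_real) simp
  have main: "measure \<mu> {0} \<le> e * J / pi" if e: "0 < e" for e
  proof -
    define C where "C = {x. measure \<mu> {x} \<noteq> 0} \<union> uminus ` {x. measure \<mu> {x} \<noteq> 0}"
    have "countable C" unfolding C_def using countable_support by auto
    then obtain \<epsilon> where "\<epsilon> \<in> {0<..<e}" "\<epsilon> \<notin> C"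
      using open_minus_countable[of C "{0<..<e}"] e by auto
    hence eps: "0 < \<epsilon>" "\<epsilon> < e" and m1: "measure \<mu> {\<epsilon>} = 0" and m2: "measure \<mu> {-\<epsilon>} = 0"
      unfolding C_def by (auto simp: image_iff)
    define F where "F = (\<lambda>t::real. (iexp (- (t * (-\<epsilon>))) - iexp (- (t * \<epsilon>))) / (\<i> * complex_of_real t))"
    have Fb: "norm (F t) \<le> 2 * \<epsilon>" for t
    proof (cases "t = 0")
      case True thus ?thesis using eps by (simp add: F_def)
    next
      case False
      have "F t = (iexp (t * \<epsilon>) - iexp (t * (-\<epsilon>))) / (\<i> * t)" unfolding F_def by simp
      also have "norm \<dots> \<le> \<epsilon> - (-\<epsilon>)" using False eps by (intro Levy_Inversion_aux2) auto
      finally show ?thesis by simp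
    qed
    have LI: "(\<lambda>T. complex_of_real (1 / (2 * pi)) *
        (CLBINT t=ereal (real_of_int (- int T))..ereal (real T). F t * char \<mu> t))
       \<longlonglongrightarrow> complex_of_real (measure \<mu> {-\<epsilon><..\<epsilon>})"
      using Levy_Inversion[of "-\<epsilon>" \<epsilon>] m1 m2 eps unfolding F_def by simp
    have bnd: "norm (complex_of_real (1 / (2 * pi)) *
        (CLBINT t=ereal (real_of_int (- int T))..ereal (real T). F t * char \<mu> t)) \<le> \<epsilon> * J / pi" for T :: nat
    proof -
      define h where "h = (\<lambda>t. indicator {- real T..real T} t *\<^sub>R (F t * char \<mu> t))"
      have eq: "(CLBINT t=ereal (real_of_int (- int T))..ereal (real T). F t * char \<mu> t) = integral\<^sup>L lborel h"
        unfolding h_def by (simp add: interval_integral_Icc set_lebesgue_integral_def)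
      have hb: "norm (h t) \<le> 2 * \<epsilon> * g t" for t
      proof -
        have "norm (h t) \<le> norm (F t * char \<mu> t)" unfolding h_def by (simp add: indicator_def)
        also have "\<dots> = norm (F t) * g t" by (simp add: norm_mult normch)
        also have "\<dots> \<le> 2 * \<epsilon> * g t" using Fb[of t] by (intro mult_right_mono) (auto simp: g_def)
        finally show ?thesis .
      qed
      have "norm (integral\<^sup>L lborel h) \<le> 2 * \<epsilon> * J"
      proof (cases "integrable lborel h")
        case True
        have "norm (integral\<^sup>L lborel h) \<le> integral\<^sup>L lborel (\<lambda>t. norm (h t))" by (rule integral_norm_bound)
        also have "\<dots> \<le> integral\<^sup>L lborel (\<lambda>t. 2 * \<epsilon> * g t)"
          using True ig hb by (intro integral_mono) auto
        also have "\<dots> = 2 * \<epsilon> * J" unfolding J_def by simp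
        finally show ?thesis .
      next
        case False thus ?thesis using J0 eps by (simp add: not_integrable_integral_eq)
      qed
      hence "1 / (2 * pi) * norm (integral\<^sup>L lborel h) \<le> 1 / (2 * pi) * (2 * \<epsilon> * J)"
        by (intro mult_left_mono) auto
      moreover have "norm (complex_of_real (1 / (2 * pi)) * integral\<^sup>L lborel h) = 1 / (2 * pi) * norm (integral\<^sup>L lborel h)"
        by (simp only: norm_mult norm_of_real) simp
      moreover have "1 / (2 * pi) * (2 * \<epsilon> * J) = \<epsilon> * J / pi" by simp
      ultimately have "norm (complex_of_real (1 / (2 * pi)) * integral\<^sup>L lborel h) \<le> \<epsilon> * J / pi" by simp
      thus ?thesis unfolding eq .
    qed
    have "norm (complex_of_real (measure \<mu> {-\<epsilon><..\<epsilon>})) \<le> \<epsilon> * J / pi"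
      by (rule LIMSEQ_le_const2[OF tendsto_norm[OF LI]]) (use bnd in auto)
    hence "measure \<mu> {-\<epsilon><..\<epsilon>} \<le> \<epsilon> * J / pi" by simp
    moreover have "measure \<mu> {0} \<le> measure \<mu> {-\<epsilon><..\<epsilon>}"
      using eps by (intro finite_measure_mono) auto
    moreover have "\<epsilon> * J / pi \<le> e * J / pi" using eps J0 by (intro divide_right_mono mult_right_mono) auto
    ultimately show ?thesis by linarith
  qed
  have "measure \<mu> {0} \<le> 0"
  proof (rule field_le_epsilon)
    fix d :: real assume d: "0 < d"
    define e where "e = d / (J / pi + 1)"
    have p: "0 < J / pi + 1" using J0 by (simp add: add_nonneg_pos)
    have e0: "0 < e" unfolding e_def using d p by simp
    have "measure \<mu> {0} \<le> e * J / pi" by (rule main[OF e0])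
    also have "\<dots> \<le> e * (J / pi + 1)" using e0 J0 by (simp add: field_simps)
    also have "\<dots> = d" unfolding e_def using p by simp
    finally show "measure \<mu> {0} \<le> 0 + d" by simp
  qed
  thus ?thesis using measure_nonneg[of \<mu> "{0}"] by linarith
qed



lemma half:
  fixes \<mu> :: "real measure" and \<alpha> c :: real
  assumes rd: "real_distribution \<mu>" and a: "0 < \<alpha>" and c: "0 < c"
    and ch: "\<And>u. char \<mu> u = exp (- complex_of_real (\<bar>u\<bar> powr \<alpha> * c))"
  shows "measure \<mu> {0..} = 1/2"
proof -
  interpret real_distribution \<mu> by (rule rd)
  define \<nu> where "\<nu> = distr \<mu> borel uminus"
  have mu: "uminus \<in> measurable \<mu> (borel :: real measure)" by simp
  have rdn: "real_distribution \<nu>" unfolding \<nu>_def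
    by (rule real_distribution_distr) simp
  have "char \<nu> u = char \<mu> u" for u
  proof -
    have "char \<nu> u = (CLINT x|\<mu>. iexp (u * (- x)))"
      unfolding \<nu>_def char_def by (subst integral_distr) auto
    also have "\<dots> = char \<mu> (- u)" unfolding char_def by simp
    also have "\<dots> = char \<mu> u" unfolding ch by simp
    finally show ?thesis .
  qed
  hence "\<nu> = \<mu>" using Levy_uniqueness[OF rdn rd] by auto
  hence "measure \<mu> {0..} = measure \<nu> {0..}" by simp
  also have "\<dots> = measure \<mu> (uminus -` {0..} \<inter> space \<mu>)"
    unfolding \<nu>_def by (rule measure_distr) auto
  also have "uminus -` {0..} \<inter> space \<mu> = {..(0::real)}" by auto
  finally have sym: "measure \<mu> {0..} = measure \<mu> {..0}" .
  have "measure \<mu> ({0..} \<union> {..0}) = measure \<mu> {0..} + measure \<mu> {..0} - measure \<mu> ({0..} \<inter> {..0})"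
    by (rule measure_Un3) (auto simp: fmeasurable_eq_sets)
  moreover have "{0..} \<union> {..0} = (UNIV :: real set)" by auto
  moreover have "{0..} \<inter> {..0} = {0::real}" by auto
  moreover have "measure \<mu> UNIV = 1" using prob_space by simp
  moreover have "measure \<mu> {0} = 0" by (rule no_atom[OF rd a c ch])
  ultimately show ?thesis using sym by simp
qed



lemma comb:
  fixes q :: "nat \<Rightarrow> nat \<Rightarrow> real"
  assumes q00: "q 0 0 = 1"
  and q0k: "\<And>k. k \<ge> 1 \<Longrightarrow> q 0 k = 1/2"
  and qkk: "\<And>k. k \<ge> 1 \<Longrightarrow> q k k = 1/2"
  and qsym: "\<And>j k. q j k = q k j"
  and qpair: "\<And>j k. 1 \<le> j \<Longrightarrow> j < k \<Longrightarrow> q j k + q (k - j) k = 3/4"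
  and N: "N \<ge> 1"
  shows "(\<Sum>j<N. \<Sum>k<N. q j k) = 1 + 3 * (real N - 1) / 2 + 3 * (real N - 1) * (real N - 2) / 8"
  using N
proof (induction N rule: nat_induct_at_least)
  case base
  thus ?case using q00 by simp
next
  case (Suc N)
  have r: "(\<Sum>j\<in>{1..<N}. q j N) = 3 * (real N - 1) / 8"
  proof -
    have "(\<Sum>j\<in>{1..<N}. q (N - j) N) = (\<Sum>j\<in>{1..<N}. q j N)"
      by (rule sum.reindex_bij_witness[of _ "\<lambda>j. N - j" "\<lambda>j. N - j"]) auto
    hence "2 * (\<Sum>j\<in>{1..<N}. q j N) = (\<Sum>j\<in>{1..<N}. q j N + q (N - j) N)"
      by (simp add: sum.distrib)
    also have "\<dots> = (\<Sum>j\<in>{1..<N}. 3/4)" by (intro sum.cong refl) (simp add: qpair)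
    also have "\<dots> = 3/4 * (real N - 1)" using Suc.hyps by (simp add: of_nat_diff)
    finally show ?thesis by simp
  qed
  have c1: "(\<Sum>j<N. q j N) = 1/2 + 3 * (real N - 1) / 8"
  proof -
    have "(\<Sum>j<N. q j N) = (\<Sum>j\<in>{0..<N}. q j N)" by (simp add: atLeast0LessThan)
    also have "\<dots> = q 0 N + (\<Sum>j\<in>{1..<N}. q j N)" using Suc.hyps by (subst sum.atLeast_Suc_lessThan) auto
    finally show ?thesis using r q0k[of N] Suc.hyps by simp
  qed
  have c2: "(\<Sum>k<N. q N k) = 1/2 + 3 * (real N - 1) / 8"
    using c1 qsym by simp
  have "(\<Sum>j<Suc N. \<Sum>k<Suc N. q j k) = (\<Sum>j<N. \<Sum>k<N. q j k) + (\<Sum>j<N. q j N) + (\<Sum>k<N. q N k) + q N N"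
    by (simp add: sum.distrib)
  also have "\<dots> = 1 + 3 * (real N - 1) / 2 + 3 * (real N - 1) * (real N - 2) / 8
      + (1/2 + 3 * (real N - 1) / 8) + (1/2 + 3 * (real N - 1) / 8) + 1/2"
    using Suc.IH c1 c2 qkk[of N] Suc.hyps by simp
  also have "\<dots> = 1 + 3 * (real (Suc N) - 1) / 2 + 3 * (real (Suc N) - 1) * (real (Suc N) - 2) / 8"
    by (simp add: field_simps)
  finally show ?case .
qed



lemma (in prob_space) indep2:
  fixes Z :: "nat \<Rightarrow> 'a \<Rightarrow> real"
  assumes ind: "indep_vars (\<lambda>_. borel) Z {..<2}" and ij: "i < 2" "j < 2" "i \<noteq> j"
  shows "indep_var borel (Z i) borel (Z j)"
proof -
  have rv: "random_variable borel (Z k)" if "k < 2" for k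
    using ind that unfolding indep_vars_def by auto
  have cb: "case_bool (borel::real measure) borel = (\<lambda>_. borel)" by (auto split: bool.split)
  show ?thesis
    unfolding indep_var_def cb
  proof (subst indep_vars_finite[where E = "\<lambda>_. sets borel"])
    show "\<forall>A\<in>UNIV \<rightarrow> sets borel. prob (\<Inter>b\<in>UNIV. case_bool (Z i) (Z j) b -` A b \<inter> space M) =
           (\<Prod>b\<in>UNIV. prob (case_bool (Z i) (Z j) b -` A b \<inter> space M))"
    proof
      fix A :: "bool \<Rightarrow> real set" assume A: "A \<in> UNIV \<rightarrow> sets borel"
      define A' where "A' = (\<lambda>k. if k = i then A True else A False)"
      have "prob (\<Inter>k\<in>{i, j}. Z k -` A' k \<inter> space M) = (\<Prod>k\<in>{i, j}. prob (Z k -` A' k \<inter> space M))"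
        using A ij by (intro indep_varsD[OF ind]) (auto simp: A'_def)
      moreover have "(\<Inter>k\<in>{i, j}. Z k -` A' k \<inter> space M) = (\<Inter>b\<in>UNIV. case_bool (Z i) (Z j) b -` A b \<inter> space M)"
        using ij by (auto simp: A'_def UNIV_bool)
      moreover have "(\<Prod>k\<in>{i, j}. prob (Z k -` A' k \<inter> space M)) = (\<Prod>b\<in>UNIV. prob (case_bool (Z i) (Z j) b -` A b \<inter> space M))"
        using ij by (simp add: A'_def UNIV_bool)
      ultimately show "prob (\<Inter>b\<in>UNIV. case_bool (Z i) (Z j) b -` A b \<inter> space M) =
           (\<Prod>b\<in>UNIV. prob (case_bool (Z i) (Z j) b -` A b \<inter> space M))" by simp
    qed
  qed (use rv ij in \<open>auto simp: Int_stable_def sets.sigma_sets_eq[of borel, simplified] split: bool.split\<close>)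
qed



lemma law_eq:
  assumes L: "sym_stable_levy M \<alpha> X" and "0 \<le> s" "s \<le> t" "0 \<le> s'" "s' \<le> t'" "t - s = t' - s'"
  shows "distr M borel (\<lambda>\<omega>. X t \<omega> - X s \<omega>) = distr M borel (\<lambda>\<omega>. X t' \<omega> - X s' \<omega>)"
proof -
  interpret prob_space M using L unfolding sym_stable_levy_def by auto
  have m: "\<And>t. t \<ge> 0 \<Longrightarrow> X t \<in> borel_measurable M" using L unfolding sym_stable_levy_def by auto
  have ch: "\<And>s t u. 0 \<le> s \<Longrightarrow> s \<le> t \<Longrightarrow> char (distr M borel (\<lambda>\<omega>. X t \<omega> - X s \<omega>)) u
          = exp (- complex_of_real (\<bar>u\<bar> powr \<alpha> * (t - s)))" using L unfolding sym_stable_levy_def by auto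
  show ?thesis
  proof (rule Levy_uniqueness)
    show "real_distribution (distr M borel (\<lambda>\<omega>. X t \<omega> - X s \<omega>))"
      using m assms by (intro real_distribution_distr borel_measurable_diff) auto
    show "real_distribution (distr M borel (\<lambda>\<omega>. X t' \<omega> - X s' \<omega>))"
      using m assms by (intro real_distribution_distr borel_measurable_diff) auto
    show "char (distr M borel (\<lambda>\<omega>. X t \<omega> - X s \<omega>)) = char (distr M borel (\<lambda>\<omega>. X t' \<omega> - X s' \<omega>))"
      using assms by (auto simp: ch)
  qed
qed

lemma prob_half:
  assumes L: "sym_stable_levy M \<alpha> X" and a: "0 < \<alpha>" and st: "0 \<le> s" "s < t"
  shows "measure M {\<omega>\<in>space M. 0 \<le> X t \<omega> - X s \<omega>} = 1/2"
proof -
  interpret prob_space M using L unfolding sym_stable_levy_def by auto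
  have m: "\<And>t. t \<ge> 0 \<Longrightarrow> X t \<in> borel_measurable M" using L unfolding sym_stable_levy_def by auto
  have ch: "\<And>s t u. 0 \<le> s \<Longrightarrow> s \<le> t \<Longrightarrow> char (distr M borel (\<lambda>\<omega>. X t \<omega> - X s \<omega>)) u
          = exp (- complex_of_real (\<bar>u\<bar> powr \<alpha> * (t - s)))" using L unfolding sym_stable_levy_def by auto
  have mm: "(\<lambda>\<omega>. X t \<omega> - X s \<omega>) \<in> borel_measurable M" using m st by (intro borel_measurable_diff) auto
  have "measure (distr M borel (\<lambda>\<omega>. X t \<omega> - X s \<omega>)) {0..} = 1/2"
    using st by (intro half[OF _ a, of _ "t - s"] real_distribution_distr mm ch) auto
  moreover have "measure (distr M borel (\<lambda>\<omega>. X t \<omega> - X s \<omega>)) {0..} = measure M ((\<lambda>\<omega>. X t \<omega> - X s \<omega>) -` {0..} \<inter> space M)"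
    by (rule measure_distr[OF mm]) auto
  moreover have "(\<lambda>\<omega>. X t \<omega> - X s \<omega>) -` {0..} \<inter> space M = {\<omega>\<in>space M. 0 \<le> X t \<omega> - X s \<omega>}" by auto
  ultimately show ?thesis by simp
qed



lemma pair_prob:
  assumes L: "sym_stable_levy M \<alpha> X" and al: "0 < \<alpha>" and ab: "0 < a" "a < b"
  shows "measure M {\<omega>\<in>space M. 0 \<le> X a \<omega> - X 0 \<omega> \<and> 0 \<le> X b \<omega> - X 0 \<omega>}
       + measure M {\<omega>\<in>space M. 0 \<le> X (b - a) \<omega> - X 0 \<omega> \<and> 0 \<le> X b \<omega> - X 0 \<omega>} = 3/4"
proof -
  interpret prob_space M using L unfolding sym_stable_levy_def by auto
  have m: "\<And>t. t \<ge> 0 \<Longrightarrow> X t \<in> borel_measurable M" using L unfolding sym_stable_levy_def by auto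
  have indall: "\<And>s m. 0 \<le> s 0 \<Longrightarrow> strict_mono s \<Longrightarrow>
        indep_vars (\<lambda>_. borel) (\<lambda>i \<omega>. X (s (Suc i)) \<omega> - X (s i) \<omega>) {..<m}"
    using L unfolding sym_stable_levy_def by auto
  have ind2: "indep_var borel (\<lambda>\<omega>. X u \<omega> - X 0 \<omega>) borel (\<lambda>\<omega>. X b \<omega> - X u \<omega>) \<and>
              indep_var borel (\<lambda>\<omega>. X b \<omega> - X u \<omega>) borel (\<lambda>\<omega>. X u \<omega> - X 0 \<omega>)"
    if u: "0 < u" "u < b" for u
  proof -
    define s where "s = (\<lambda>i::nat. if i = 0 then 0 else if i = 1 then u else b + (real i - 2))"
    have "strict_mono s"
    proof (rule strict_mono_Suc_iff[THEN iffD2], intro allI)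
      fix n show "s n < s (Suc n)" using u by (cases "n = 0"; cases "n = 1") (auto simp: s_def)
    qed
    hence I: "indep_vars (\<lambda>_. borel) (\<lambda>i \<omega>. X (s (Suc i)) \<omega> - X (s i) \<omega>) {..<2}"
      by (intro indall) (auto simp: s_def)
    have s0: "s 0 = 0" "s (Suc 0) = u" "s (Suc (Suc 0)) = b" by (auto simp: s_def)
    show ?thesis
      using indep2[OF I, of 0 1] indep2[OF I, of 1 0] by (simp add: s0)
  qed
  define A where "A = (\<lambda>\<omega>. X a \<omega> - X 0 \<omega>)"
  define B where "B = (\<lambda>\<omega>. X b \<omega> - X a \<omega>)"
  define A' where "A' = (\<lambda>\<omega>. X (b - a) \<omega> - X 0 \<omega>)"
  define B' where "B' = (\<lambda>\<omega>. X b \<omega> - X (b - a) \<omega>)"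
  have iAB: "indep_var borel A borel B" and iBA: "indep_var borel B borel A"
    using ind2[of a] ab unfolding A_def B_def by auto
  have iAB': "indep_var borel A' borel B'"
    using ind2[of "b - a"] ab unfolding A'_def B'_def by auto
  have dA': "distr M borel A' = distr M borel B" unfolding A'_def B_def
    using ab by (intro law_eq[OF L]) auto
  have dB': "distr M borel B' = distr M borel A" unfolding A_def B'_def
    using ab by (intro law_eq[OF L]) auto
  have jd: "distr M (borel \<Otimes>\<^sub>M borel) (\<lambda>\<omega>. (A' \<omega>, B' \<omega>)) = distr M (borel \<Otimes>\<^sub>M borel) (\<lambda>\<omega>. (B \<omega>, A \<omega>))"
    using iAB' iBA unfolding indep_var_distribution_eq dA' dB' by metis
  define S where "S = {p \<in> space (borel \<Otimes>\<^sub>M borel). 0 \<le> fst p \<and> 0 \<le> (fst p + snd p :: real)}"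
  have S: "S \<in> sets (borel \<Otimes>\<^sub>M borel)" unfolding S_def by measurable
  have mA: "A \<in> borel_measurable M" "B \<in> borel_measurable M" "A' \<in> borel_measurable M" "B' \<in> borel_measurable M"
    unfolding A_def B_def A'_def B'_def using m ab by (auto intro!: borel_measurable_diff)
  have "measure M {\<omega>\<in>space M. 0 \<le> A' \<omega> \<and> 0 \<le> A' \<omega> + B' \<omega>}
      = measure (distr M (borel \<Otimes>\<^sub>M borel) (\<lambda>\<omega>. (A' \<omega>, B' \<omega>))) S"
    using mA S by (subst measure_distr) (auto simp: S_def space_pair_measure intro!: arg_cong[where f="measure M"])
  also have "\<dots> = measure (distr M (borel \<Otimes>\<^sub>M borel) (\<lambda>\<omega>. (B \<omega>, A \<omega>))) S" by (simp only: jd)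
  also have "\<dots> = measure M {\<omega>\<in>space M. 0 \<le> B \<omega> \<and> 0 \<le> B \<omega> + A \<omega>}"
    using mA S by (subst measure_distr) (auto simp: S_def space_pair_measure intro!: arg_cong[where f="measure M"])
  finally have swap: "measure M {\<omega>\<in>space M. 0 \<le> A' \<omega> \<and> 0 \<le> A' \<omega> + B' \<omega>}
      = measure M {\<omega>\<in>space M. 0 \<le> B \<omega> \<and> 0 \<le> B \<omega> + A \<omega>}" .
  define E1 where "E1 = {\<omega>\<in>space M. 0 \<le> A \<omega> \<and> 0 \<le> A \<omega> + B \<omega>}"
  define E2 where "E2 = {\<omega>\<in>space M. 0 \<le> B \<omega> \<and> 0 \<le> B \<omega> + A \<omega>}"
  have E: "E1 \<in> events" "E2 \<in> events" unfolding E1_def E2_def using mA by measurable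
  have h1: "measure M (E1 \<union> E2) = measure M E1 + measure M E2 - measure M (E1 \<inter> E2)"
    using E by (intro measure_Un3) (auto simp: fmeasurable_eq_sets)
  have h2: "E1 \<union> E2 = {\<omega>\<in>space M. 0 \<le> X b \<omega> - X 0 \<omega>}"
    unfolding E1_def E2_def A_def B_def by auto
  have h3: "E1 \<inter> E2 = {\<omega>\<in>space M. A \<omega> \<in> {0..} \<and> B \<omega> \<in> {0..}}"
    unfolding E1_def E2_def by auto
  have h4: "measure M {\<omega>\<in>space M. A \<omega> \<in> {0..} \<and> B \<omega> \<in> {0..}}
       = measure M {\<omega>\<in>space M. A \<omega> \<in> {0..}} * measure M {\<omega>\<in>space M. B \<omega> \<in> {0..}}"
    using prob_indep_random_variable[OF iAB, of "{0..}" "{0..}"] by simp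
  have h5: "measure M {\<omega>\<in>space M. A \<omega> \<in> {0..}} = 1/2"
    unfolding A_def using prob_half[OF L al, of 0 a] ab by simp
  have h6: "measure M {\<omega>\<in>space M. B \<omega> \<in> {0..}} = 1/2"
    unfolding B_def using prob_half[OF L al, of a b] ab by simp
  have h7: "measure M {\<omega>\<in>space M. 0 \<le> X b \<omega> - X 0 \<omega>} = 1/2"
    using prob_half[OF L al, of 0 b] ab by simp
  have "measure M (E1 \<inter> E2) = 1/4" unfolding h3 h4 h5 h6 by simp
  hence sum: "measure M E1 + measure M E2 = 3/4" using h1 unfolding h2 h7 by simp
  have e1: "E1 = {\<omega>\<in>space M. 0 \<le> X a \<omega> - X 0 \<omega> \<and> 0 \<le> X b \<omega> - X 0 \<omega>}"
    unfolding E1_def A_def B_def by auto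
  have e2: "{\<omega>\<in>space M. 0 \<le> A' \<omega> \<and> 0 \<le> A' \<omega> + B' \<omega>} = {\<omega>\<in>space M. 0 \<le> X (b - a) \<omega> - X 0 \<omega> \<and> 0 \<le> X b \<omega> - X 0 \<omega>}"
    unfolding A'_def B'_def by auto
  show ?thesis using sum swap e1 e2 unfolding E2_def by simp
qed



theorem lemma11:
  fixes M :: "'a measure" and X :: "real \<Rightarrow> 'a \<Rightarrow> real"
    and \<alpha> T :: real and n :: nat
  assumes "0 < \<alpha>" and "\<alpha> \<le> 2"
    and "sym_stable_levy M \<alpha> X"
    and "T > 0" and "n \<ge> 1"
  shows "prob_space.expectation M (\<lambda>\<omega>. (occ_est X T n \<omega>)\<^sup>2)
           = 3/8 * T\<^sup>2 + 3/8 * T * (T / real n) + 1/4 * (T / real n)\<^sup>2"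
proof -
  note L = assms(3) and al = assms(1)
  interpret prob_space M using L unfolding sym_stable_levy_def by auto
  define D where "D = T / real n"
  have D0: "0 < D" unfolding D_def using assms by simp
  have mX: "\<And>t. t \<ge> 0 \<Longrightarrow> X t \<in> borel_measurable M" using L unfolding sym_stable_levy_def by auto
  have X0: "AE \<omega> in M. X 0 \<omega> = 0" using L unfolding sym_stable_levy_def by auto
  have m[measurable]: "X (real k * D) \<in> borel_measurable M" for k using mX D0 by simp
  have m0[measurable]: "X 0 \<in> borel_measurable M" using mX by simp
  define q where "q = (\<lambda>j k. measure M {\<omega>\<in>space M. 0 \<le> X (real j * D) \<omega> - X 0 \<omega> \<and> 0 \<le> X (real k * D) \<omega> - X 0 \<omega>})"
  have hk: "measure M {\<omega>\<in>space M. 0 \<le> X (real k * D) \<omega> - X 0 \<omega>} = 1/2" if "k \<ge> 1" for k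
    using prob_half[OF L al, of 0 "real k * D"] that D0 by simp
  have S: "(\<Sum>j<n. \<Sum>k<n. q j k) = 1 + 3 * (real n - 1) / 2 + 3 * (real n - 1) * (real n - 2) / 8"
  proof (rule comb)
    show "q 0 0 = 1" unfolding q_def using prob_space by simp
    show "q 0 k = 1/2" if "k \<ge> 1" for k using hk[OF that] unfolding q_def by simp
    show "q k k = 1/2" if "k \<ge> 1" for k using hk[OF that] unfolding q_def by simp
    show "q j k = q k j" for j k unfolding q_def by (simp add: conj_commute)
    show "q j k + q (k - j) k = 3/4" if "1 \<le> j" "j < k" for j k
    proof -
      have e: "real (k - j) * D = real k * D - real j * D" using that by (simp add: of_nat_diff left_diff_distrib)
      have "real j * D < real k * D" using that D0 by simp
      moreover have "0 < real j * D" using that D0 by simp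
      ultimately show ?thesis unfolding q_def e by (intro pair_prob[OF L al]) auto
    qed
  qed (use assms in auto)
  define I where "I = (\<lambda>k \<omega>. indicator {0..} (X (real k * D) \<omega>) :: real)"
  have occ: "occ_est X T n \<omega> = D * (\<Sum>k<n. I k \<omega>)" for \<omega>
    unfolding occ_est_def I_def D_def by (simp add: sum.atLeast1_atMost_eq)
  have sq: "(occ_est X T n \<omega>)\<^sup>2 = (\<Sum>j<n. \<Sum>k<n. D\<^sup>2 * (I j \<omega> * I k \<omega>))" for \<omega>
    unfolding occ power2_eq_square by (simp add: sum_product sum_distrib_left algebra_simps)
  have int: "integrable M (\<lambda>\<omega>. D\<^sup>2 * (I j \<omega> * I k \<omega>))" for j k
    by (rule integrable_const_bound[where B = "D\<^sup>2"]) (auto simp: I_def indicator_def)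
  have ex: "expectation (\<lambda>\<omega>. I j \<omega> * I k \<omega>) = q j k" for j k
  proof -
    have "expectation (\<lambda>\<omega>. I j \<omega> * I k \<omega>) =
        expectation (indicator {\<omega>\<in>space M. 0 \<le> X (real j * D) \<omega> \<and> 0 \<le> X (real k * D) \<omega>})"
      by (intro Bochner_Integration.integral_cong) (auto simp: I_def indicator_def)
    also have "\<dots> = measure M {\<omega>\<in>space M. 0 \<le> X (real j * D) \<omega> \<and> 0 \<le> X (real k * D) \<omega>}"
      by (simp add: Int_absorb2 subset_iff)
    also have "\<dots> = q j k" unfolding q_def
      by (rule measure_eq_AE) (use X0 in auto)
    finally show ?thesis .
  qed
  have "expectation (\<lambda>\<omega>. (occ_est X T n \<omega>)\<^sup>2) = (\<Sum>j<n. \<Sum>k<n. D\<^sup>2 * q j k)"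
    unfolding sq
    by (subst Bochner_Integration.integral_sum, use int in \<open>auto intro!: sum.cong simp: ex\<close>)+
  also have "\<dots> = D\<^sup>2 * (1 + 3 * (real n - 1) / 2 + 3 * (real n - 1) * (real n - 2) / 8)"
    by (simp add: sum_distrib_left[symmetric] S)
  also have "\<dots> = 3/8 * T\<^sup>2 + 3/8 * T * (T / real n) + 1/4 * (T / real n)\<^sup>2"
    unfolding D_def using assms by (simp add: field_simps power2_eq_square)
  finally show ?thesis .
qed

end
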